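(* Let $S\subseteq\mathbb{C}^2\otimes\mathbb{C}^2$ be a two-dimensional subspace whose orthogonal projector $P_S$ is separable. Then $S$ has an orthonormal basis consisting of product states. Moreover, if $|\psi\rangle$ and $|\Phi\rangle$ are any two orthogonal entangled unit vectors in $S^\perp$, then (i) $\psi\Phi^{-1}$ has two antiparallel eigenvalues, and (ii) $C(\psi)=C(\Phi)$.
   Context: For a two-qubit pure state $|\psi\rangle\in\mathbb{C}^2\otimes\mathbb{C}^2$, $\psi$ denotes the unique $2\times 2$ complex matrix with $|\psi\rangle=(\mathbb{I}\otimes\psi)|\Psi^+\rangle$, where $|\Psi^+\rangle=\tfrac{1}{\sqrt2}(|00\rangle+|11\rangle)$. The concurrence of $|\psi\rangle$ is $C(\psi)=|\det\psi|$; $|\psi\rangle$ is entangled iff $C(\psi)>0$, i.e. iff $\psi$ is invertible. Two complex numbers $z_1,z_2$ are antiparallel if $z_1=az_2$ for some real $a<0$; a $2\times2$ matrix "has two antiparallel eigenvalues" if its two eigenvalues are antiparallel. A positive semidefinite operator on $\mathbb{C}^2\otimes\mathbb{C}^2$ is separable if it is a nonnegative linear combination of product projectors $|a\rangle\langle a|\otimes|b\rangle\langle b|$. *)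

theory Defs
  imports "HOL-Analysis.Analysis"
begin

text \<open>The two-qubit space C^2 (x) C^2 is modelled as complex^(2 \<times> 2):
  the component (i,j) is the coefficient of |i j>.\<close>

type_synonym qubit = "complex ^ 2"
type_synonym qstate = "complex ^ (2 \<times> 2)"
type_synonym qop = "complex ^ (2 \<times> 2) ^ (2 \<times> 2)"

definition cinner :: "complex ^ 'n \<Rightarrow> complex ^ 'n \<Rightarrow> complex" where
  "cinner x y = (\<Sum>i\<in>UNIV. cnj (x $ i) * y $ i)"

definition unit_vec :: "complex ^ 'n \<Rightarrow> bool" where
  "unit_vec x \<longleftrightarrow> cinner x x = 1"

definition tensor :: "qubit \<Rightarrow> qubit \<Rightarrow> qstate" where
  "tensor a b = (\<chi> p. a $ fst p * b $ snd p)"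

definition kron :: "complex^2^2 \<Rightarrow> complex^2^2 \<Rightarrow> qop" where
  "kron A B = (\<chi> p q. A $ fst p $ fst q * B $ snd p $ snd q)"

definition outer :: "complex ^ 'n \<Rightarrow> complex ^ 'n \<Rightarrow> complex ^ 'n ^ 'n" where
  "outer x y = (\<chi> i j. x $ i * cnj (y $ j))"

definition is_product_state :: "qstate \<Rightarrow> bool" where
  "is_product_state v \<longleftrightarrow> (\<exists>a b. v = tensor a b)"

definition Psi_plus :: qstate where
  "Psi_plus = complex_of_real (1 / sqrt 2) *s
      (tensor (axis 0 1) (axis 0 1) + tensor (axis 1 1) (axis 1 1))"

definition state_mat :: "qstate \<Rightarrow> complex^2^2" where
  "state_mat v = (THE M. kron (mat 1) M *v Psi_plus = v)"

definition concurrence :: "qstate \<Rightarrow> real" where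
  "concurrence v = cmod (det (state_mat v))"

definition entangled :: "qstate \<Rightarrow> bool" where
  "entangled v \<longleftrightarrow> concurrence v > 0"

definition antiparallel :: "complex \<Rightarrow> complex \<Rightarrow> bool" where
  "antiparallel z1 z2 \<longleftrightarrow> (\<exists>a::real. a < 0 \<and> z1 = complex_of_real a * z2)"

definition eigenvalue :: "complex^'n^'n \<Rightarrow> complex \<Rightarrow> bool" where
  "eigenvalue M z \<longleftrightarrow> (\<exists>v. v \<noteq> 0 \<and> M *v v = z *s v)"

definition has_two_antiparallel_eigenvalues :: "complex^2^2 \<Rightarrow> bool" where
  "has_two_antiparallel_eigenvalues M \<longleftrightarrow>
     (\<exists>z1 z2. z1 \<noteq> z2 \<and> eigenvalue M z1 \<and> eigenvalue M z2 \<and> antiparallel z1 z2)"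

definition separable_op :: "qop \<Rightarrow> bool" where
  "separable_op P \<longleftrightarrow> (\<exists>n::nat. \<exists>c a b.
     (\<forall>k<n. c k \<ge> (0::real) \<and> unit_vec (a k) \<and> unit_vec (b k)) \<and>
     P = (\<Sum>k<n. c k *\<^sub>R kron (outer (a k) (a k)) (outer (b k) (b k))))"

definition orth_compl :: "qstate set \<Rightarrow> qstate set" where
  "orth_compl S = {x. \<forall>y\<in>S. cinner y x = 0}"

definition is_orth_projector :: "qstate set \<Rightarrow> qop \<Rightarrow> bool" where
  "is_orth_projector S P \<longleftrightarrow>
     (\<forall>x\<in>S. P *v x = x) \<and> (\<forall>x\<in>orth_compl S. P *v x = 0)"

end

theory Submission
  imports Defs
begin

lemma forall_22: "(\<forall>p::2\<times>2. P p) \<longleftrightarrow> P(1,1) \<and> P(1,2) \<and> P(2,1) \<and> P(2,2)"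
  by (simp add: split_paired_All forall_2)

lemma UNIV_22: "(UNIV::(2\<times>2) set) = {(1,1),(1,2),(2,1),(2,2)}"
  using exhaust_2 by auto

lemma sum_22: "sum f (UNIV::(2\<times>2) set) = f(1,1)+f(1,2)+f(2,1)+f(2,2)"
  by (simp add: UNIV_22 add.assoc)

lemma vec2_eq: "(x::'a^2) = y \<longleftrightarrow> x$1 = y$1 \<and> x$2 = y$2"
  by (simp add: vec_eq_iff forall_2)

lemma vec22_eq: "(x::'a^(2\<times>2)) = y \<longleftrightarrow> x$(1,1) = y$(1,1) \<and> x$(1,2) = y$(1,2) \<and> x$(2,1) = y$(2,1) \<and> x$(2,2) = y$(2,2)"
  unfolding vec_eq_iff forall_22 ..

lemma cinner2: "cinner (x::complex^2) y = cnj (x$1) * y$1 + cnj (x$2) * y$2"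
  by (simp add: cinner_def sum_2)

definition sm :: "qstate \<Rightarrow> complex^2^2" where
  "sm v = (\<chi> j i. complex_of_real (sqrt 2) * v$(i,j))"

lemma kron_Psi: "kron (mat 1) M *v Psi_plus = (\<chi> p. M$(snd p)$(fst p) / complex_of_real (sqrt 2))"
  unfolding vec22_eq
  by (simp add: matrix_vector_mult_def sum_22 kron_def mat_def Psi_plus_def tensor_def axis_def)

lemma sqrt2_c: "complex_of_real (sqrt 2) * complex_of_real (sqrt 2) = 2"
proof -
  have "sqrt 2 * sqrt 2 = (2::real)" by simp
  then have "complex_of_real (sqrt 2 * sqrt 2) = complex_of_real 2" by simp
  then show ?thesis by (simp only: of_real_mult) simp
qed

lemma sqrt2_nz: "complex_of_real (sqrt 2) \<noteq> 0" by simp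

lemma sqrt2_c2: "complex_of_real (sqrt 2) * (complex_of_real (sqrt 2) * x) = 2 * x"
  by (simp add: mult.assoc[symmetric] sqrt2_c)

lemma state_mat_eq: "state_mat v = sm v"
  unfolding state_mat_def
proof (rule the_equality)
  show "kron (mat 1) (sm v) *v Psi_plus = v"
    unfolding kron_Psi vec22_eq by (simp add: sm_def)
next
  fix M assume "kron (mat 1) M *v Psi_plus = v"
  then have h: "\<And>i j. v$(i,j) = M$j$i / complex_of_real (sqrt 2)"
    unfolding kron_Psi by (auto simp: vec_eq_iff)
  show "M = sm v"
    unfolding vec_eq_iff sm_def by (simp add: h)
qed


lemma det_sm: "det (sm v) = 2 * (v$(1,1)* v$(2,2) - v$(1,2)* v$(2,1))"
  unfolding det_2 sm_def by (simp add: sqrt2_c2 sqrt2_c algebra_simps)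

definition conjv :: "complex^2 \<Rightarrow> complex^2" where "conjv a = (\<chi> i. cnj (a$i))"

lemma cinner_tensor_sm:
  "cinner b (sm v *v conjv a) = complex_of_real (sqrt 2) * cinner (tensor a b) v"
  by (simp add: cinner_def sum_2 sum_22 sm_def conjv_def matrix_vector_mult_def tensor_def algebra_simps)

lemma cinner_tensor_sm_T:
  "cinner a (transpose (sm v) *v conjv b) = complex_of_real (sqrt 2) * cinner (tensor a b) v"
  by (simp add: cinner_def sum_2 sum_22 sm_def conjv_def matrix_vector_mult_def tensor_def transpose_def algebra_simps)

definition trF :: "complex^2^2 \<Rightarrow> complex^2^2 \<Rightarrow> complex" where
  "trF X Y = (\<Sum>i\<in>UNIV. \<Sum>j\<in>UNIV. cnj (X$i$j) * Y$i$j)"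

lemma trF_sm: "trF (sm u) (sm v) = 2 * cinner u v"
  unfolding trF_def cinner_def sum_2 sum_22 sm_def by (simp add: sqrt2_c2 algebra_simps)

lemma trF_T: "trF (transpose X) (transpose Y) = trF X Y"
  unfolding trF_def sum_2 transpose_def by simp

lemma cinner_tensor: "cinner (tensor a b) (tensor c d) = cinner a c * cinner b d"
  by (simp add: cinner_def sum_2 sum_22 tensor_def algebra_simps)

lemma compl_aux: fixes p1 p2 q1 q2 P1 P2 Q1 Q2 :: complex
 assumes "P1*p1 + P2*p2 = 1" "Q1*q1+Q2*q2 = 1" "P1*q1 + P2*q2 = 0" "Q1*p1 + Q2*p2 = 0"
 shows "p1*P1 + q1*Q1 = 1" "p1*P2 + q1*Q2 = 0" "p2*P1 + q2*Q1 = 0" "p2*P2+q2*Q2 = 1"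
  using assms by algebra+

lemma cinner_scale_r: "cinner x (c *s y) = c * cinner x y"
  by (simp add: cinner_def sum_distrib_left algebra_simps)

lemma cinner_scale_l: "cinner (c *s x) y = cnj c * cinner x y"
  by (simp add: cinner_def sum_distrib_left algebra_simps)

lemma cinner_self_2: "cinner (x::complex^2) x = complex_of_real ((cmod (x$1))^2 + (cmod (x$2))^2)"
  unfolding cinner2 of_real_add complex_norm_square by (simp add: mult.commute)

lemma cinner_self_pos: "(x::complex^2) \<noteq> 0 \<Longrightarrow> (cmod (x$1))^2 + (cmod (x$2))^2 > 0"
  by (auto simp: vec2_eq add_pos_nonneg add_nonneg_pos)

lemma ker_det: fixes A :: "complex^2^2" assumes "det A \<noteq> 0" "A *v x = 0" shows "x = 0"
proof -
  have "invertible A" using assms invertible_det_nz by blast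
  then obtain B :: "complex^2^2" where "B ** A = mat 1" using invertible_left_inverse by blast
  then show ?thesis using assms matrix_left_invertible_ker by blast
qed

definition d2 :: "complex^2 \<Rightarrow> complex^2 \<Rightarrow> complex" where "d2 x y = x$1 * y$2 - x$2 * y$1"

lemma d2_mul: "d2 (A *v x) (A *v y) = det A * d2 x y"
  unfolding d2_def det_2 by (simp add: matrix_vector_mult_def sum_2 algebra_simps)

lemma d2_scale: "d2 (l *s x) (m *s y) = l * m * d2 x y"
  unfolding d2_def by (simp add: algebra_simps)

lemma orthonormal_facts:
  fixes p q :: "complex^2"
  assumes up: "cinner p p = 1" and uq: "cinner q q = 1" and pq: "cinner p q = 0"
  shows "\<And>X Y. trF X Y = cinner (X *v p) (Y *v p) + cinner (X *v q) (Y *v q)"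
    and "d2 p q \<noteq> 0"
proof -
  have qp: "cinner q p = 0" using pq unfolding cinner2
    by (metis complex_cnj_add complex_cnj_cnj complex_cnj_mult complex_cnj_zero mult.commute)
  have h1: "cnj (p$1) * p$1 + cnj (p$2) * p$2 = 1" using up by (simp add: cinner2)
  have h2: "cnj (q$1) * q$1 + cnj (q$2) * q$2 = 1" using uq by (simp add: cinner2)
  have h3: "cnj (p$1) * q$1 + cnj (p$2) * q$2 = 0" using pq by (simp add: cinner2)
  have h4: "cnj (q$1) * p$1 + cnj (q$2) * p$2 = 0" using qp by (simp add: cinner2)
  note c = compl_aux[OF h1 h2 h3 h4]
  show "trF X Y = cinner (X *v p) (Y *v p) + cinner (X *v q) (Y *v q)" for X Y
    unfolding trF_def cinner2 sum_2 apply (simp add: matrix_vector_mult_def sum_2)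
    using c by algebra
  have "cnj (d2 p q) * d2 p q = 1" unfolding d2_def apply simp using h1 h2 h3 h4 by algebra
  then show "d2 p q \<noteq> 0" by auto
qed

lemma par:
  fixes r x y :: "complex^2"
  assumes r: "r \<noteq> 0" and rx: "cinner r x = 0" and ry: "cinner r y = 0" and y: "y \<noteq> 0"
  shows "\<exists>l. x = l *s y"
proof -
  have e1: "cnj (r$1) * x$1 + cnj (r$2) * x$2 = 0" using rx by (simp add: cinner2)
  have e2: "cnj (r$1) * y$1 + cnj (r$2) * y$2 = 0" using ry by (simp add: cinner2)
  have a: "cnj (r$1) * (x$1*y$2 - x$2*y$1) = 0" using e1 e2 by algebra
  have b: "cnj (r$2) * (x$1*y$2 - x$2*y$1) = 0" using e1 e2 by algebra
  have "r$1 \<noteq> 0 \<or> r$2 \<noteq> 0" using r by (auto simp: vec2_eq)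
  then have D: "x$1*y$2 = x$2*y$1" using a b by auto
  show ?thesis
  proof (cases "y$2 = 0")
    case True
    then have "y$1 \<noteq> 0" using y by (auto simp: vec2_eq)
    then show ?thesis using D True
      by (intro exI[of _ "x$1/y$1"]) (auto simp: vec2_eq field_simps)
  next
    case False
    then show ?thesis using D
      by (intro exI[of _ "x$2/y$2"]) (auto simp: vec2_eq field_simps)
  qed
qed

lemma real_aux:
  fixes L m P Q :: real
  assumes "L \<ge> 0" "m \<ge> 0" "P > 0" "Q > 0" "L * P = m * Q" "L^2 * P + m^2 * Q = P + Q"
  shows "L * m = 1"
proof -
  have mQ: "m = L * P / Q" using assms by (simp add: field_simps)
  have "L^2 * P * (P + Q) = Q * (P + Q)"
  proof -
    have "L^2 * P * Q + (L * P)^2 = Q * (P + Q)"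
    proof -
      have "Q * (L^2 * P + m^2 * Q) = Q * (P + Q)" using assms(6) by simp
      moreover have "Q * (m^2 * Q) = (m*Q)^2" by (simp add: power2_eq_square)
      ultimately show ?thesis using assms(5) by (simp add: algebra_simps power2_eq_square)
    qed
    then show ?thesis by (simp add: algebra_simps power2_eq_square)
  qed
  moreover have "P + Q \<noteq> 0" using assms by simp
  ultimately have LP: "L^2 * P = Q" using mult_right_cancel by blast
  have "(L*m)^2 * Q^2 = (L^2*P)^2" using mQ assms by (simp add: field_simps power2_eq_square)
  then have "(L*m)^2 * Q^2 = 1 * Q^2" using LP by simp
  then have "(L*m)^2 = 1" using assms by simp
  moreover have "L * m \<ge> 0" using assms by simp
  ultimately show ?thesis using power2_eq_1_iff by force
qed

lemma core:
  fixes M N :: "complex^2^2" and p q r s :: "complex^2"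
  assumes dM: "det M \<noteq> 0" and dN: "det N \<noteq> 0" and up: "cinner p p = 1" and uq: "cinner q q = 1"
    and pq: "cinner p q = 0" and r: "r \<noteq> 0" and s: "s \<noteq> 0"
    and rM: "cinner r (M *v p) = 0" and rN: "cinner r (N *v p) = 0"
    and sM: "cinner s (M *v q) = 0" and sN: "cinner s (N *v q) = 0"
    and tNM: "trF N M = 0" and tMM: "trF M M = trF N N"
  shows "\<exists>l m. M *v p = l *s (N *v p) \<and> M *v q = m *s (N *v q) \<and> N *v p \<noteq> 0 \<and> N *v q \<noteq> 0
           \<and> l \<noteq> m \<and> antiparallel l m \<and> cmod (det M) = cmod (det N)"
proof -
  note ON = orthonormal_facts[OF up uq pq]
  have p0: "p \<noteq> 0" using up by (auto simp: cinner_def)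
  have q0: "q \<noteq> 0" using uq by (auto simp: cinner_def)
  have Np: "N *v p \<noteq> 0" using ker_det[OF dN] p0 by blast
  have Nq: "N *v q \<noteq> 0" using ker_det[OF dN] q0 by blast
  have Mp: "M *v p \<noteq> 0" using ker_det[OF dM] p0 by blast
  have Mq: "M *v q \<noteq> 0" using ker_det[OF dM] q0 by blast
  obtain l where l: "M *v p = l *s (N *v p)" using par[OF r rM rN Np] by blast
  obtain m where m: "M *v q = m *s (N *v q)" using par[OF s sM sN Nq] by blast
  have l0: "l \<noteq> 0" using l Mp by auto
  have m0: "m \<noteq> 0" using m Mq by auto
  define P where "P = (cmod ((N *v p)$1))^2 + (cmod ((N *v p)$2))^2"
  define Q where "Q = (cmod ((N *v q)$1))^2 + (cmod ((N *v q)$2))^2"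
  have P0: "P > 0" unfolding P_def using cinner_self_pos[OF Np] .
  have Q0: "Q > 0" unfolding Q_def using cinner_self_pos[OF Nq] .
  have cP: "cinner (N *v p) (N *v p) = complex_of_real P" unfolding P_def by (rule cinner_self_2)
  have cQ: "cinner (N *v q) (N *v q) = complex_of_real Q" unfolding Q_def by (rule cinner_self_2)
  have lin: "l * complex_of_real P + m * complex_of_real Q = 0"
    using tNM unfolding ON(1) l m cinner_scale_r cP cQ .
  have lin2: "l * complex_of_real P = - (m * complex_of_real Q)" using lin by (simp add: eq_neg_iff_add_eq_0)
  then have "l = - (m * complex_of_real Q) / complex_of_real P" using P0 by (simp add: field_simps)
  then have lm: "l = complex_of_real (- Q / P) * m" by simp
  have anti: "antiparallel l m" unfolding antiparallel_def
    using lm P0 Q0 by (intro exI[of _ "- Q / P"]) (simp add: divide_pos_pos)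
  have neq: "l \<noteq> m"
  proof
    assume "l = m"
    then have "m * complex_of_real (P + Q) = 0" using lin by (simp add: algebra_simps)
    then have "complex_of_real (P + Q) = 0" using m0 by simp
    then show False using P0 Q0 by (simp only: of_real_eq_0_iff)
  qed
  have "det M * d2 p q = l * m * (det N * d2 p q)"
    using d2_mul[of M p q] d2_mul[of N p q] unfolding l m d2_scale apply simp by auto
  then have dMN: "det M = l * m * det N" using ON(2) by (simp add: algebra_simps)
  have tMM': "cnj l * l * complex_of_real P + cnj m * m * complex_of_real Q = complex_of_real P + complex_of_real Q"
    using tMM unfolding ON(1) l m cinner_scale_r cinner_scale_l cP cQ by (simp add: algebra_simps)
  have "cnj l * l = complex_of_real ((cmod l)^2)" by (metis complex_norm_square mult.commute)
  moreover have "cnj m * m = complex_of_real ((cmod m)^2)" by (metis complex_norm_square mult.commute)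
  ultimately have "complex_of_real ((cmod l)^2 * P + (cmod m)^2 * Q) = complex_of_real (P + Q)"
    using tMM' by simp
  then have e2: "(cmod l)^2 * P + (cmod m)^2 * Q = P + Q" using of_real_eq_iff by blast
  have "cmod (l * complex_of_real P) = cmod (m * complex_of_real Q)"
    using lin2 by simp
  then have e1: "cmod l * P = cmod m * Q" using P0 Q0 by (simp add: norm_mult)
  have "cmod l * cmod m = 1" using real_aux[OF _ _ P0 Q0 e1 e2] by simp
  then have "cmod (det M) = cmod (det N)" unfolding dMN by (simp add: norm_mult)
  then show ?thesis using l m Np Nq neq anti by blast
qed

lemma cinner_conj: "cinner y x = cnj (cinner x y)"
  by (simp add: cinner_def mult.commute)

lemma cinner_conjv: "cinner (conjv a) (conjv c) = cnj (cinner a c)"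
  by (simp add: cinner2 conjv_def mult.commute)

lemma unit_nz: "cinner b b = 1 \<Longrightarrow> b \<noteq> 0"
  by (auto simp: cinner_def)

lemma inv_facts: fixes N :: "complex^2^2" assumes "det N \<noteq> 0"
  shows "matrix_inv N ** N = mat 1" "N ** matrix_inv N = mat 1"
proof -
  have "invertible N" using assms invertible_det_nz by blast
  then have "N ** matrix_inv N = mat 1 \<and> matrix_inv N ** N = mat 1"
    unfolding invertible_def matrix_inv_def by (rule someI_ex)
  then show "matrix_inv N ** N = mat 1" "N ** matrix_inv N = mat 1" by auto
qed

lemma mat_mv: "mat z *v (v::complex^2) = z *s v"
  by (simp add: vec2_eq matrix_vector_mult_def sum_2 mat_def)

lemma eig_T: fixes X :: "complex^2^2" assumes "eigenvalue (transpose X) z" shows "eigenvalue X z"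
proof -
  obtain v where v: "v \<noteq> 0" "transpose X *v v = z *s v" using assms unfolding eigenvalue_def by blast
  have "(transpose X - mat z) *v v = 0" using v by (simp add: matrix_vector_mult_diff_rdistrib mat_mv)
  then have "det (transpose X - mat z) = 0" using ker_det v(1) by blast
  moreover have "transpose X - mat z = transpose (X - mat z)"
    by (simp add: vec_eq_iff transpose_def mat_def)
  ultimately have "det (X - mat z) = 0" by (simp add: det_transpose)
  then have "\<not> invertible (X - mat z)" using invertible_det_nz by blast
  then obtain w where w: "(X - mat z) *v w = 0" "w \<noteq> 0"
    using invertible_left_inverse matrix_left_invertible_ker by blast
  then have "X *v w = z *s w" by (simp add: matrix_vector_mult_diff_rdistrib mat_mv)
  then show ?thesis using w unfolding eigenvalue_def by blast
qed

lemma part2: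
  fixes a b c d :: "complex^2" and \<psi> \<Phi> :: qstate
  assumes ua: "cinner a a = 1" and ub: "cinner b b = 1" and uc: "cinner c c = 1" and ud: "cinner d d = 1"
    and o: "cinner (tensor a b) (tensor c d) = 0"
    and p1: "cinner (tensor a b) \<psi> = 0" and p2: "cinner (tensor c d) \<psi> = 0"
    and f1: "cinner (tensor a b) \<Phi> = 0" and f2: "cinner (tensor c d) \<Phi> = 0"
    and up: "unit_vec \<psi>" and uf: "unit_vec \<Phi>" and pf: "cinner \<psi> \<Phi> = 0"
    and ep: "entangled \<psi>" and ef: "entangled \<Phi>"
  shows "has_two_antiparallel_eigenvalues (state_mat \<psi> ** matrix_inv (state_mat \<Phi>))
         \<and> concurrence \<psi> = concurrence \<Phi>"
proof -
  define M where "M = sm \<psi>"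
  define N where "N = sm \<Phi>"
  have dM: "det M \<noteq> 0" using ep unfolding entangled_def concurrence_def state_mat_eq M_def by auto
  have dN: "det N \<noteq> 0" using ef unfolding entangled_def concurrence_def state_mat_eq N_def by auto
  have tNM: "trF N M = 0" unfolding M_def N_def trF_sm using pf cinner_conj[of \<Phi> \<psi>] by simp
  have tMM: "trF M M = trF N N" unfolding M_def N_def trF_sm using up uf unfolding unit_vec_def by simp
  have s2: "complex_of_real (sqrt 2) \<noteq> 0" by simp
  have X: "state_mat \<psi> ** matrix_inv (state_mat \<Phi>) = M ** matrix_inv N"
    unfolding M_def N_def state_mat_eq ..
  have conc: "concurrence \<psi> = cmod (det M)" "concurrence \<Phi> = cmod (det N)"
    unfolding concurrence_def state_mat_eq M_def N_def by auto
  have "cinner a c * cinner b d = 0" using o by (simp add: cinner_tensor)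
  then consider "cinner a c = 0" | "cinner b d = 0" by auto
  then show ?thesis
  proof cases
    case 1
    have h: "cinner b (M *v conjv a) = 0" "cinner b (N *v conjv a) = 0"
         "cinner d (M *v conjv c) = 0" "cinner d (N *v conjv c) = 0"
      unfolding M_def N_def cinner_tensor_sm using p1 p2 f1 f2 by auto
    obtain l m where lm: "M *v conjv a = l *s (N *v conjv a)" "M *v conjv c = m *s (N *v conjv c)"
      "N *v conjv a \<noteq> 0" "N *v conjv c \<noteq> 0" "l \<noteq> m" "antiparallel l m" "cmod (det M) = cmod (det N)"
    proof -
      have u1: "cinner (conjv a) (conjv a) = 1" using cinner_conjv[of a a] ua by simp
      have u2: "cinner (conjv c) (conjv c) = 1" using cinner_conjv[of c c] uc by simp
      have u3: "cinner (conjv a) (conjv c) = 0" using cinner_conjv[of a c] 1 by simp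
      show ?thesis using core[OF dM dN u1 u2 u3 unit_nz[OF ub] unit_nz[OF ud] h tNM tMM] that by blast
    qed
    have ev: "(M ** matrix_inv N) *v (N *v x) = M *v x" for x
    proof -
      have "(M ** matrix_inv N) *v (N *v x) = ((M ** matrix_inv N) ** N) *v x" by (rule matrix_vector_mul_assoc)
      also have "(M ** matrix_inv N) ** N = M ** (matrix_inv N ** N)" by (rule matrix_mul_assoc[symmetric])
      also have "\<dots> = M" using inv_facts(1)[OF dN] by simp
      finally show ?thesis .
    qed
    have e1: "(M ** matrix_inv N) *v (N *v conjv a) = l *s (N *v conjv a)" using ev[of "conjv a"] lm(1) by simp
    have e2: "(M ** matrix_inv N) *v (N *v conjv c) = m *s (N *v conjv c)" using ev[of "conjv c"] lm(2) by simp
    have "eigenvalue (M ** matrix_inv N) l" unfolding eigenvalue_def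
      using lm(3) e1 by blast
    moreover have "eigenvalue (M ** matrix_inv N) m" unfolding eigenvalue_def
      using lm(4) e2 by blast
    ultimately show ?thesis unfolding has_two_antiparallel_eigenvalues_def X conc
      using lm(5,6,7) by blast
  next
    case 2
    have h: "cinner a (transpose M *v conjv b) = 0" "cinner a (transpose N *v conjv b) = 0"
         "cinner c (transpose M *v conjv d) = 0" "cinner c (transpose N *v conjv d) = 0"
      unfolding M_def N_def cinner_tensor_sm_T using p1 p2 f1 f2 by auto
    obtain l m where lm: "transpose M *v conjv b = l *s (transpose N *v conjv b)"
      "transpose M *v conjv d = m *s (transpose N *v conjv d)"
      "l \<noteq> m" "antiparallel l m" "cmod (det (transpose M)) = cmod (det (transpose N))"
    proof -
      have u1: "cinner (conjv b) (conjv b) = 1" using cinner_conjv[of b b] ub by simp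
      have u2: "cinner (conjv d) (conjv d) = 1" using cinner_conjv[of d d] ud by simp
      have u3: "cinner (conjv b) (conjv d) = 0" using cinner_conjv[of b d] 2 by simp
      have dMT: "det (transpose M) \<noteq> 0" using dM by (simp add: det_transpose)
      have dNT: "det (transpose N) \<noteq> 0" using dN by (simp add: det_transpose)
      have t1: "trF (transpose N) (transpose M) = 0" using tNM by (simp add: trF_T)
      have t2: "trF (transpose M) (transpose M) = trF (transpose N) (transpose N)" using tMM by (simp add: trF_T)
      show ?thesis using core[OF dMT dNT u1 u2 u3 unit_nz[OF ua] unit_nz[OF uc] h t1 t2] that by blast
    qed
    have ev: "transpose (M ** matrix_inv N) *v x = l *s x" if "transpose M *v x = l *s (transpose N *v x)" for x l
    proof -
      have "transpose (M ** matrix_inv N) *v x = (transpose (matrix_inv N) ** transpose M) *v x"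
        by (simp only: matrix_transpose_mul)
      also have "\<dots> = transpose (matrix_inv N) *v (transpose M *v x)"
        by (rule matrix_vector_mul_assoc[symmetric])
      also have "\<dots> = l *s (transpose (matrix_inv N) *v (transpose N *v x))"
        using that by (simp add: vec.scale)
      also have "transpose (matrix_inv N) *v (transpose N *v x) = (transpose (matrix_inv N) ** transpose N) *v x"
        by (rule matrix_vector_mul_assoc)
      also have "transpose (matrix_inv N) ** transpose N = mat 1"
        by (simp add: matrix_transpose_mul[symmetric] inv_facts[OF dN] transpose_mat)
      finally show ?thesis by simp
    qed
    have nb: "conjv b \<noteq> 0" using unit_nz[of "conjv b"] cinner_conjv[of b b] ub by simp
    have nd: "conjv d \<noteq> 0" using unit_nz[of "conjv d"] cinner_conjv[of d d] ud by simp
    have "eigenvalue (transpose (M ** matrix_inv N)) l" unfolding eigenvalue_def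
      using ev[OF lm(1)] nb by (intro exI[of _ "conjv b"]) simp
    then have "eigenvalue (M ** matrix_inv N) l" by (rule eig_T)
    moreover have "eigenvalue (transpose (M ** matrix_inv N)) m" unfolding eigenvalue_def
      using ev[OF lm(2)] nd by (intro exI[of _ "conjv d"]) simp
    then have "eigenvalue (M ** matrix_inv N) m" by (rule eig_T)
    ultimately show ?thesis unfolding has_two_antiparallel_eigenvalues_def X conc
      using lm(3,4,5) by (simp add: det_transpose) blast
  qed
qed

lemma scaleR_s: "r *\<^sub>R (x::complex^'n) = complex_of_real r *s x"
  by (simp add: vec_eq_iff) (simp add: scaleR_conv_of_real)

lemma kron_outer: "kron (outer a a) (outer b b) = outer (tensor a b) (tensor a b)"
  by (simp add: vec_eq_iff kron_def outer_def tensor_def algebra_simps)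

lemma outer_mv: "outer x y *v v = cinner y v *s x"
  by (simp add: vec_eq_iff matrix_vector_mult_def outer_def cinner_def sum_distrib_left sum_distrib_right algebra_simps)

lemma scaleR_mv: "(r *\<^sub>R (A::complex^'n^'m)) *v v = r *\<^sub>R (A *v v)"
  by (simp add: vec_eq_iff matrix_vector_mult_def scaleR_sum_right)

lemma sum_mv: "(\<Sum>k<(n::nat). (A k :: complex^'n^'m)) *v v = (\<Sum>k<n. A k *v v)"
  by (induction n) (simp_all add: matrix_vector_mult_add_rdistrib)

lemma cinner_add_l: "cinner (x + y) z = cinner x z + cinner y z"
  by (simp add: cinner_def sum.distrib algebra_simps)

lemma cinner_add_r: "cinner z (x + y) = cinner z x + cinner z y"
  by (simp add: cinner_def sum.distrib algebra_simps)

lemma cinner_sum_r: "cinner z (\<Sum>k<(n::nat). f k) = (\<Sum>k<n. cinner z (f k))"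
  by (induction n) (simp_all add: cinner_add_r, simp add: cinner_def)

lemma cinner_scaleR_r: "cinner z (r *\<^sub>R y) = complex_of_real r * cinner z y"
  by (simp add: scaleR_s cinner_scale_r)

lemma cinner_self_real: "cinner (z::complex^'n) z = complex_of_real (\<Sum>i\<in>UNIV. (cmod (z$i))^2)"
  unfolding cinner_def of_real_sum
  by (rule sum.cong) (simp_all add: complex_norm_square mult.commute del: of_real_power)

lemma cinner_zero: "cinner (z::complex^'n) z = 0 \<Longrightarrow> z = 0"
proof -
  assume "cinner z z = 0"
  then have "(\<Sum>i\<in>UNIV. (cmod (z$i))^2) = 0" unfolding cinner_self_real of_real_eq_0_iff .
  then have "\<forall>i\<in>UNIV. (cmod (z$i))^2 = 0" by (subst (asm) sum_nonneg_eq_0_iff) auto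
  then show "z = 0" by (simp add: vec_eq_iff)
qed

lemma inner_Re: "inner (x::complex^'n) y = Re (cinner x y)"
  by (simp add: inner_vec_def cinner_def inner_complex_def)

lemma in_S:
  fixes S :: "qstate set" and P :: qop and x :: "nat \<Rightarrow> qstate"
  assumes sub: "vec.subspace S" and proj: "is_orth_projector S P"
    and Pv: "\<And>v. P *v v = (\<Sum>k<n. c k *\<^sub>R (cinner (x k) v *s x k))"
    and c: "\<And>k. k < n \<Longrightarrow> c k \<ge> 0"
    and k: "k < n" "c k > 0"
  shows "x k \<in> S"
proof -
  have rsub: "subspace S" using sub unfolding subspace_def vec.subspace_def by (simp add: scaleR_s)
  obtain y z where y: "y \<in> span S" and z: "\<And>w. w \<in> span S \<Longrightarrow> orthogonal z w" and xk: "x k = y + z"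
    using orthogonal_subspace_decomp_exists[of S "x k"] by metis
  have spanS: "span S = S" using rsub by simp
  have zo: "z \<in> orth_compl S" unfolding orth_compl_def
  proof (intro CollectI ballI)
    fix w assume w: "w \<in> S"
    have "Re (cinner z w) = 0" using z[of w] w spanS by (simp add: orthogonal_def inner_Re)
    moreover have "\<i> *s w \<in> S" using sub w by (simp add: vec.subspace_def)
    then have "Re (cinner z (\<i> *s w)) = 0" using z[of "\<i> *s w"] spanS by (simp add: orthogonal_def inner_Re)
    then have "Im (cinner z w) = 0" by (simp add: cinner_scale_r)
    ultimately have "cinner z w = 0" by (simp add: complex_eq_iff)
    then show "cinner w z = 0" using cinner_conj[of w z] by simp
  qed
  then have Pz: "P *v z = 0" using proj unfolding is_orth_projector_def by blast
  have "cinner z (P *v z) = (\<Sum>k<n. complex_of_real (c k * (cmod (cinner (x k) z))^2))"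
    unfolding Pv cinner_sum_r cinner_scaleR_r cinner_scale_r
  proof (rule sum.cong)
    fix k
    show "complex_of_real (c k) * (cinner (x k) z * cinner z (x k)) = complex_of_real (c k * (cmod (cinner (x k) z))\<^sup>2)"
      using complex_norm_square[of "cinner (x k) z"] cinner_conj[of z "x k"]
      by (simp del: of_real_power)
  qed simp
  then have "(\<Sum>k<n. complex_of_real (c k * (cmod (cinner (x k) z))^2)) = 0" using Pz by (simp add: cinner_def)
  then have "complex_of_real (\<Sum>k<n. c k * (cmod (cinner (x k) z))^2) = 0" by (simp only: of_real_sum of_real_mult of_real_power)
  then have "(\<Sum>k<n. c k * (cmod (cinner (x k) z))^2) = 0" by (simp only: of_real_eq_0_iff)
  then have "\<forall>j\<in>{..<n}. c j * (cmod (cinner (x j) z))^2 = 0"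
    by (subst (asm) sum_nonneg_eq_0_iff) (auto intro!: mult_nonneg_nonneg c)
  then have "c k * (cmod (cinner (x k) z))^2 = 0" using k by blast
  then have xz: "cinner (x k) z = 0" using k by simp
  have "cinner y z = 0" using zo y spanS unfolding orth_compl_def by auto
  then have "cinner z z = 0" using xz unfolding xk cinner_add_l by simp
  then have "z = 0" by (rule cinner_zero)
  then show ?thesis using xk y spanS by simp
qed

definition dd :: "qstate \<Rightarrow> complex" where "dd v = v$(1,1) * v$(2,2) - v$(1,2) * v$(2,1)"

lemma dd_tensor: "dd (tensor a b) = 0"
  by (simp add: dd_def tensor_def algebra_simps)

lemma dd_comb: "dd (\<alpha> *s tensor a b + \<beta> *s tensor c d) = \<alpha> * \<beta> * d2 a c * d2 b d"
  unfolding dd_def d2_def tensor_def by simp algebra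

lemma span2: "v \<in> vec.span {u, w} \<Longrightarrow> \<exists>\<alpha> \<beta>. v = \<alpha> *s u + \<beta> *s w"
proof -
  assume "v \<in> vec.span {u, w}"
  then obtain k where "v - k *s u \<in> vec.span {w}" unfolding vec.span_insert by blast
  then obtain l where "v - k *s u = l *s w" unfolding vec.span_singleton by blast
  then have "v = k *s u + l *s w" by (simp add: algebra_simps)
  then show ?thesis by blast
qed

lemma indep2:
  assumes ind: "vec.independent {u, w}" and ne: "u \<noteq> w" and eq: "\<alpha> *s u + \<beta> *s w = 0"
  shows "\<alpha> = 0 \<and> \<beta> = 0"
proof -
  have b: "\<beta> = 0"
  proof (rule ccontr)
    assume "\<beta> \<noteq> 0"
    then have "w = (- \<alpha> / \<beta>) *s u" using eq
      by (simp add: vec_eq_iff field_simps) (metis add.commute add_eq_0_iff mult.commute)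
    then have "w \<in> vec.span {u}" by (simp only:) (rule vec.span_scale[OF vec.span_base], simp)
    moreover have "{u, w} - {w} = {u}" using ne by auto
    ultimately have "w \<in> vec.span ({u, w} - {w})" by simp
    then show False using ind unfolding vec.dependent_def by blast
  qed
  have "u \<noteq> 0" using ind vec.dependent_zero by blast
  then have "\<alpha> = 0" using eq b by simp
  then show ?thesis using b by simp
qed


lemma sub_eq:
  assumes sub: "vec.subspace S" and dim: "vec.dim S = 2" and Sspan: "S = vec.span {u, w}"
    and u: "u \<in> vec.span {e1, e2}" and w: "w \<in> vec.span {e1, e2}"
  shows "vec.span {e1, e2} = S \<and> e1 \<in> S \<and> e2 \<in> S"
proof -
  have "S \<subseteq> vec.span {e1, e2}" unfolding Sspan
    using u w by (intro vec.span_minimal) auto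
  moreover have "vec.dim (vec.span {e1, e2}) \<le> 2"
  proof -
    have "vec.dim (vec.span {e1, e2}) = vec.dim {e1, e2}" by (rule vec.dim_span)
    also have "\<dots> \<le> card {e1, e2}" by (rule vec.dim_le_card') simp
    also have "\<dots> \<le> 2" by (simp add: card_insert_if)
    finally show ?thesis .
  qed
  ultimately have "S = vec.span {e1, e2}"
    using vec.subspace_dim_equal[OF sub vec.subspace_span] dim by simp
  then show ?thesis using vec.span_base[of e1 "{e1,e2}"] vec.span_base[of e2 "{e1,e2}"] by simp
qed

lemma c_par: assumes "cinner a a = 1" "d2 a c = 0" shows "c = cinner a c *s a"
proof -
  have h1: "cnj (a$1) * a$1 + cnj (a$2) * a$2 = 1" using assms(1) by (simp add: cinner2)
  have h2: "a$1 * c$2 - a$2 * c$1 = 0" using assms(2) by (simp add: d2_def)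
  have "c$1 = (cnj (a$1) * c$1 + cnj (a$2) * c$2) * a$1" using h1 h2 by algebra
  moreover have "c$2 = (cnj (a$1) * c$1 + cnj (a$2) * c$2) * a$2" using h1 h2 by algebra
  ultimately show ?thesis by (simp add: vec2_eq cinner2 ring_distribs)
qed

lemma tensor_split_r: "tensor a b = b$1 *s tensor a (axis 1 1) + b$2 *s tensor a (axis 2 1)"
  by (simp add: vec22_eq tensor_def axis_def)

lemma tensor_split_l: "tensor a b = a$1 *s tensor (axis 1 1) b + a$2 *s tensor (axis 2 1) b"
  by (simp add: vec22_eq tensor_def axis_def)

lemma tensor_scale: "tensor (t *s a) d = tensor a (t *s d)"
  by (simp add: vec22_eq tensor_def)

lemma axis_unit: "cinner (axis (i::2) (1::complex)) (axis i 1) = 1"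
  using exhaust_2[of i] by (auto simp: cinner2 axis_def)

lemma axis_orth: "cinner (axis 1 (1::complex)) (axis (2::2) 1) = 0"
  by (simp add: cinner2 axis_def)

lemma in_span2: "a *s e1 + b *s e2 \<in> vec.span {e1, e2}"
  by (intro vec.span_add vec.span_scale vec.span_base) auto

lemma term_lemma:
  "r *\<^sub>R (cinner (\<beta> *s w) v *s (\<beta> *s w)) = (complex_of_real (r * (cmod \<beta>)^2) * cinner w v) *s w"
proof -
  have h: "complex_of_real ((cmod \<beta>)^2) = \<beta> * cnj \<beta>" by (rule complex_norm_square)
  show ?thesis unfolding vec_eq_iff
    by (simp add: cinner_scale_l del: of_real_power) (simp add: scaleR_conv_of_real h algebra_simps del: of_real_power)
qed

lemma basis_from:
  fixes S :: "qstate set" and x :: "nat \<Rightarrow> qstate" and a b c d :: "complex^2" and P :: qop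
  assumes sub: "vec.subspace S" and dim: "vec.dim S = 2"
    and Pv: "\<And>v. P *v v = (\<Sum>k<n. cc k *\<^sub>R (cinner (x k) v *s x k))"
    and xS: "\<And>k. k < n \<Longrightarrow> cc k > 0 \<Longrightarrow> x k \<in> S"
    and cnn0: "\<And>k. k < n \<Longrightarrow> cc k \<ge> 0"
    and xprod: "\<And>k. dd (x k) = 0"
    and PS: "\<And>v. v \<in> S \<Longrightarrow> P *v v = v"
    and ua: "cinner a a = 1" and ub: "cinner b b = 1" and uc: "cinner c c = 1" and ud: "cinner d d = 1"
    and ind: "vec.independent {tensor a b, tensor c d}" and ne: "tensor a b \<noteq> tensor c d"
    and Sspan: "S = vec.span {tensor a b, tensor c d}"
  shows "\<exists>a b c d. cinner a a = 1 \<and> cinner b b = 1 \<and> cinner c c = 1 \<and> cinner d d = 1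
     \<and> tensor a b \<in> S \<and> tensor c d \<in> S \<and> cinner (tensor a b) (tensor c d) = 0
     \<and> vec.span {tensor a b, tensor c d} = S"
proof -
  define u where "u = tensor a b"
  define w where "w = tensor c d"
  consider "d2 a c = 0" | "d2 b d = 0" | "d2 a c \<noteq> 0 \<and> d2 b d \<noteq> 0" by blast
  then show ?thesis
  proof cases
    case 1
    have cc: "c = cinner a c *s a" using c_par[OF ua 1] .
    have "vec.span {tensor a (axis 1 1), tensor a (axis 2 1)} = S \<and> tensor a (axis 1 1) \<in> S \<and> tensor a (axis 2 1) \<in> S"
    proof (rule sub_eq[OF sub dim Sspan])
      show "tensor a b \<in> vec.span {tensor a (axis 1 1), tensor a (axis 2 1)}"
        by (subst tensor_split_r) (rule in_span2)
      have "tensor c d = tensor a (cinner a c *s d)" by (subst cc) (rule tensor_scale)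
      then show "tensor c d \<in> vec.span {tensor a (axis 1 1), tensor a (axis 2 1)}"
        by (simp only:) (subst tensor_split_r, rule in_span2)
    qed
    moreover have "cinner (tensor a (axis 1 1)) (tensor a (axis 2 1)) = 0"
      by (simp add: cinner_tensor axis_orth)
    ultimately show ?thesis using ua axis_unit by blast
  next
    case 2
    have dd': "d = cinner b d *s b" using c_par[OF ub 2] .
    have "vec.span {tensor (axis 1 1) b, tensor (axis 2 1) b} = S \<and> tensor (axis 1 1) b \<in> S \<and> tensor (axis 2 1) b \<in> S"
    proof (rule sub_eq[OF sub dim Sspan])
      show "tensor a b \<in> vec.span {tensor (axis 1 1) b, tensor (axis 2 1) b}"
        by (subst tensor_split_l) (rule in_span2)
      have "tensor c d = tensor (cinner b d *s c) b" by (subst dd') (rule tensor_scale[symmetric])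
      then show "tensor c d \<in> vec.span {tensor (axis 1 1) b, tensor (axis 2 1) b}"
        by (simp only:) (subst tensor_split_l, rule in_span2)
    qed
    moreover have "cinner (tensor (axis 1 1) b) (tensor (axis 2 1) b) = 0"
      by (simp add: cinner_tensor axis_orth)
    ultimately show ?thesis using ub axis_unit by blast
  next
    case 3
    have coef: "\<forall>k. \<exists>ab. (k < n \<and> cc k > 0) \<longrightarrow> x k = fst ab *s u + snd ab *s w \<and> fst ab * snd ab = 0"
    proof
      fix k
      show "\<exists>ab. (k < n \<and> cc k > 0) \<longrightarrow> x k = fst ab *s u + snd ab *s w \<and> fst ab * snd ab = 0"
      proof (cases "k < n \<and> cc k > 0")
        case True
        then have "x k \<in> vec.span {u, w}" using xS Sspan u_def w_def by auto
        then obtain \<alpha> \<beta> where ab: "x k = \<alpha> *s u + \<beta> *s w" using span2 by blast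
        have "\<alpha> * \<beta> * d2 a c * d2 b d = 0" using xprod[of k] dd_comb[of \<alpha> a b \<beta> c d] ab u_def w_def by simp
        then have "\<alpha> * \<beta> = 0" using 3 by simp
        then show ?thesis using ab by (intro exI[of _ "(\<alpha>, \<beta>)"]) simp
      next
        case False
        then show ?thesis by blast
      qed
    qed
    from choice[OF coef] obtain f where f: "\<And>k. k < n \<Longrightarrow> cc k > 0 \<Longrightarrow>
        x k = fst (f k) *s u + snd (f k) *s w \<and> fst (f k) * snd (f k) = 0" by blast
    define A where "A = (\<Sum>k<n. cc k * (cmod (fst (f k)))^2)"
    define B where "B = (\<Sum>k<n. cc k * (cmod (snd (f k)))^2)"
    have cnn: "\<And>k. k < n \<Longrightarrow> cc k = 0 \<or> cc k > 0" using cnn0 by force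
    have trm: "cc k *\<^sub>R (cinner (x k) v *s x k) =
       (complex_of_real (cc k * (cmod (fst (f k)))^2) * cinner u v) *s u +
       (complex_of_real (cc k * (cmod (snd (f k)))^2) * cinner w v) *s w" if k: "k < n" for k v
    proof (cases "cc k = 0")
      case True
      then show ?thesis by simp
    next
      case False
      then have pos: "cc k > 0" using cnn[OF k] by simp
      note fk = f[OF k pos]
      show ?thesis
      proof (cases "fst (f k) = 0")
        case True
        then have "x k = snd (f k) *s w" using fk by simp
        then show ?thesis using True term_lemma[of "cc k" "snd (f k)" w v] by simp
      next
        case False
        then have "snd (f k) = 0" using fk by simp
        then have "x k = fst (f k) *s u" using fk by simp
        then show ?thesis using \<open>snd (f k) = 0\<close> term_lemma[of "cc k" "fst (f k)" u v] by simp
      qed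
    qed
    have PvAB: "P *v v = (complex_of_real A * cinner u v) *s u + (complex_of_real B * cinner w v) *s w" for v
    proof -
      have "P *v v = (\<Sum>k<n. (complex_of_real (cc k * (cmod (fst (f k)))^2) * cinner u v) *s u +
       (complex_of_real (cc k * (cmod (snd (f k)))^2) * cinner w v) *s w)"
        unfolding Pv by (rule sum.cong) (simp_all add: trm)
      also have "\<dots> = (complex_of_real A * cinner u v) *s u + (complex_of_real B * cinner w v) *s w"
        unfolding A_def B_def sum.distrib of_real_sum sum_distrib_right vec.scale_sum_left ..
      finally show ?thesis .
    qed
    have uS: "u \<in> S" unfolding Sspan u_def by (rule vec.span_base) simp
    have wS: "w \<in> S" unfolding Sspan w_def by (rule vec.span_base) simp
    have uu: "cinner u u = 1" unfolding u_def cinner_tensor using ua ub by simp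
    have "(complex_of_real A * cinner u u - 1) *s u + (complex_of_real B * cinner w u) *s w = 0"
    proof -
      have "(complex_of_real A * cinner u u) *s u + (complex_of_real B * cinner w u) *s w = u"
        using PS[OF uS] PvAB[of u] by simp
      then show ?thesis by (simp add: vec_eq_iff algebra_simps)
    qed
    then have "complex_of_real A * cinner u u - 1 = 0 \<and> complex_of_real B * cinner w u = 0"
      using indep2[OF ind ne] unfolding u_def w_def by blast
    then have A1: "complex_of_real A = 1" using uu by simp
    have "(complex_of_real A * cinner u w) *s u + (complex_of_real B * cinner w w - 1) *s w = 0"
    proof -
      have "(complex_of_real A * cinner u w) *s u + (complex_of_real B * cinner w w) *s w = w"
        using PS[OF wS] PvAB[of w] by simp
      then show ?thesis by (simp add: vec_eq_iff algebra_simps)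
    qed
    then have "complex_of_real A * cinner u w = 0 \<and> complex_of_real B * cinner w w - 1 = 0"
      using indep2[OF ind ne] unfolding u_def w_def by blast
    then have "complex_of_real A * cinner u w = 0" by blast
    then have "cinner u w = 0" using A1 by simp
    then show ?thesis using ua ub uc ud uS wS Sspan u_def w_def by blast
  qed
qed


lemma part1:
  fixes S :: "qstate set" and P :: qop
  assumes sub: "vec.subspace S" and dim: "vec.dim S = 2"
    and proj: "is_orth_projector S P" and sep: "separable_op P"
  shows "\<exists>a b c d. cinner a a = 1 \<and> cinner b b = 1 \<and> cinner c c = 1 \<and> cinner d d = 1
     \<and> tensor a b \<in> S \<and> tensor c d \<in> S \<and> cinner (tensor a b) (tensor c d) = 0
     \<and> vec.span {tensor a b, tensor c d} = S"
proof -
  obtain n cc a b where cab: "\<forall>k<(n::nat). cc k \<ge> (0::real) \<and> unit_vec (a k) \<and> unit_vec (b k)"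
    and Pdef: "P = (\<Sum>k<n. cc k *\<^sub>R kron (outer (a k) (a k)) (outer (b k) (b k)))"
    using sep unfolding separable_op_def by blast
  define x where "x k = tensor (a k) (b k)" for k
  have cnn: "\<And>k. k < n \<Longrightarrow> cc k \<ge> 0" using cab by blast
  have Pv: "P *v v = (\<Sum>k<n. cc k *\<^sub>R (cinner (x k) v *s x k))" for v
    unfolding Pdef sum_mv
    by (rule sum.cong) (simp_all add: scaleR_mv kron_outer outer_mv x_def)
  have PS: "\<And>v. v \<in> S \<Longrightarrow> P *v v = v" using proj unfolding is_orth_projector_def by blast
  have xS: "\<And>k. k < n \<Longrightarrow> cc k > 0 \<Longrightarrow> x k \<in> S"
    using in_S[OF sub proj Pv cnn] by blast
  define X where "X = x ` {k. k < n \<and> cc k > 0}"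
  have XS: "X \<subseteq> S" unfolding X_def using xS by blast
  have SX: "S = vec.span X"
  proof
    show "vec.span X \<subseteq> S" using vec.span_minimal[OF XS sub] .
    show "S \<subseteq> vec.span X"
    proof
      fix v assume v: "v \<in> S"
      have "P *v v \<in> vec.span X" unfolding Pv
      proof (rule vec.span_sum)
        fix k assume k: "k \<in> {..<n}"
        show "cc k *\<^sub>R (cinner (x k) v *s x k) \<in> vec.span X"
        proof (cases "cc k = 0")
          case True then show ?thesis by (simp add: vec.span_zero)
        next
          case False
          then have "cc k > 0" using cnn[of k] k by simp
          then have "x k \<in> X" unfolding X_def using k by blast
          then have "(complex_of_real (cc k) * cinner (x k) v) *s x k \<in> vec.span X"
            by (intro vec.span_scale vec.span_base)
          then show ?thesis by (simp add: scaleR_s)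
        qed
      qed
      then show "v \<in> vec.span X" using PS[OF v] by simp
    qed
  qed
  obtain B where BX: "B \<subseteq> X" and indB: "vec.independent B" and XB: "X \<subseteq> vec.span B"
    using vec.maximal_independent_subset[of X] by blast
  have SB: "S = vec.span B"
  proof
    show "vec.span B \<subseteq> S" unfolding SX using BX by (rule vec.span_mono)
    show "S \<subseteq> vec.span B" unfolding SX using vec.span_minimal[OF XB vec.subspace_span] .
  qed
  have "card B = 2" using vec.dim_span_eq_card_independent[OF indB] SB dim by simp
  then obtain u w where Buw: "B = {u, w}" and ne: "u \<noteq> w" by (meson card_2_iff)
  have "u \<in> X" "w \<in> X" using BX Buw by auto
  then obtain k1 k2 where k1: "k1 < n" "u = x k1" and k2: "k2 < n" "w = x k2"
    unfolding X_def by blast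
  have un: "\<And>k. k < n \<Longrightarrow> cinner (a k) (a k) = 1 \<and> cinner (b k) (b k) = 1"
    using cab unfolding unit_vec_def by blast
  show ?thesis
  proof (rule basis_from[OF sub dim Pv xS cnn _ PS])
    show "\<And>k. dd (x k) = 0" unfolding x_def by (rule dd_tensor)
    show "cinner (a k1) (a k1) = 1" "cinner (b k1) (b k1) = 1" using un[OF k1(1)] by auto
    show "cinner (a k2) (a k2) = 1" "cinner (b k2) (b k2) = 1" using un[OF k2(1)] by auto
    show "vec.independent {tensor (a k1) (b k1), tensor (a k2) (b k2)}"
      using indB Buw k1 k2 x_def by simp
    show "tensor (a k1) (b k1) \<noteq> tensor (a k2) (b k2)" using ne k1 k2 x_def by simp
    show "S = vec.span {tensor (a k1) (b k1), tensor (a k2) (b k2)}"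
      using SB Buw k1 k2 x_def by simp
  qed
qed

theorem lemma1:
  fixes S :: "qstate set" and P :: qop
  assumes "vec.subspace S" and "vec.dim S = 2"
    and "is_orth_projector S P" and "separable_op P"
  shows "(\<exists>e1 e2. e1 \<in> S \<and> e2 \<in> S \<and> unit_vec e1 \<and> unit_vec e2 \<and> cinner e1 e2 = 0
            \<and> vec.span {e1, e2} = S \<and> is_product_state e1 \<and> is_product_state e2)
       \<and> (\<forall>\<psi> \<Phi>. \<psi> \<in> orth_compl S \<and> \<Phi> \<in> orth_compl S \<and> unit_vec \<psi> \<and> unit_vec \<Phi>
            \<and> cinner \<psi> \<Phi> = 0 \<and> entangled \<psi> \<and> entangled \<Phi> \<longrightarrow>
            has_two_antiparallel_eigenvalues (state_mat \<psi> ** matrix_inv (state_mat \<Phi>))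
            \<and> concurrence \<psi> = concurrence \<Phi>)"
proof -
  obtain a b c d where ua: "cinner a a = 1" and ub: "cinner b b = 1" and uc: "cinner c c = 1"
    and ud: "cinner d d = 1" and e1S: "tensor a b \<in> S" and e2S: "tensor c d \<in> S"
    and o: "cinner (tensor a b) (tensor c d) = 0" and sp: "vec.span {tensor a b, tensor c d} = S"
    using part1[OF assms] by blast
  have u1: "unit_vec (tensor a b)" unfolding unit_vec_def cinner_tensor using ua ub by simp
  have u2: "unit_vec (tensor c d)" unfolding unit_vec_def cinner_tensor using uc ud by simp
  have A: "\<exists>e1 e2. e1 \<in> S \<and> e2 \<in> S \<and> unit_vec e1 \<and> unit_vec e2 \<and> cinner e1 e2 = 0
            \<and> vec.span {e1, e2} = S \<and> is_product_state e1 \<and> is_product_state e2"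
    using e1S e2S u1 u2 o sp unfolding is_product_state_def by blast
  have B: "has_two_antiparallel_eigenvalues (state_mat \<psi> ** matrix_inv (state_mat \<Phi>))
            \<and> concurrence \<psi> = concurrence \<Phi>"
    if h: "\<psi> \<in> orth_compl S \<and> \<Phi> \<in> orth_compl S \<and> unit_vec \<psi> \<and> unit_vec \<Phi>
            \<and> cinner \<psi> \<Phi> = 0 \<and> entangled \<psi> \<and> entangled \<Phi>" for \<psi> \<Phi>
  proof (rule part2[OF ua ub uc ud o])
    show "cinner (tensor a b) \<psi> = 0" "cinner (tensor c d) \<psi> = 0"
         "cinner (tensor a b) \<Phi> = 0" "cinner (tensor c d) \<Phi> = 0"
      using h e1S e2S unfolding orth_compl_def by auto
  qed (use h in auto)
  show ?thesis using A B by blast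
qed


end
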